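(* Let $x_v\geq0$ for $v\in\Lambda_N$ and let $\check h_v=h_v+x_v$ for $v\in\Lambda_N$. Then with probability 1, for every $v\in\mathcal C^{\Lambda_N}\cap\check{\mathcal C}^{\Lambda_N}$ there is a nearest-neighbor path in $\mathcal C^{\Lambda_N}\cap\check{\mathcal C}^{\Lambda_N}$ joining $v$ and $\partial\Lambda_N$ (i.e. starting at $v$ and ending at a vertex adjacent to $\partial\Lambda_N$).
   Context: Let $\{h_v:v\in\mathbb Z^2\}$ be i.i.d. Gaussian with mean zero and variance $\epsilon^2>0$. Write $u\sim v$ if $|u-v|_1=1$; $\partial A=\{v\in\mathbb Z^2\setminus A:u\sim v\text{ for some }u\in A\}$; $\Lambda_N=\{v\in\mathbb Z^2:|v|_\infty\le N\}$. For a field $g$ on $\Lambda_N$ and $\sigma\in\{-1,1\}^{\Lambda_N}$, $H^{\Lambda_N,\pm}_g(\sigma)=-\big(\sum_{u\sim v,\,u,v\in\Lambda_N}\sigma_u\sigma_v\pm\sum_{u\sim v,\,u\in\Lambda_N,v\in\partial\Lambda_N}\sigma_u+\sum_{u\in\Lambda_N}\sigma_ug_u\big)$ (each unordered pair counted once); $\sigma^{\Lambda_N,\pm}$ and $\check\sigma^{\Lambda_N,\pm}$ are the ground states (minimizers) for $g=h$ and $g=\check h$ respectively (unique a.s.). $\mathcal C^{\Lambda_N}=\{v:\sigma^{\Lambda_N,+}_v=1,\sigma^{\Lambda_N,-}_v=-1\}$ and $\check{\mathcal C}^{\Lambda_N}=\{v:\check\sigma^{\Lambda_N,+}_v=1,\check\sigma^{\Lambda_N,-}_v=-1\}$.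 *)

theory Defs
  imports "HOL-Probability.Probability"
begin

type_synonym site = "int \<times> int"

definition nn :: "site \<Rightarrow> site \<Rightarrow> bool" where
  "nn u v \<longleftrightarrow> \<bar>fst u - fst v\<bar> + \<bar>snd u - snd v\<bar> = 1"

definition Lambda :: "nat \<Rightarrow> site set" where
  "Lambda N = {v. \<bar>fst v\<bar> \<le> int N \<and> \<bar>snd v\<bar> \<le> int N}"

definition bdry :: "site set \<Rightarrow> site set" where
  "bdry A = {v. v \<notin> A \<and> (\<exists>u\<in>A. nn u v)}"

definition configs :: "nat \<Rightarrow> (site \<Rightarrow> real) set" where
  "configs N = {\<sigma>. (\<forall>v\<in>Lambda N. \<sigma> v = 1 \<or> \<sigma> v = -1) \<and> (\<forall>v. v \<notin> Lambda N \<longrightarrow> \<sigma> v = 0)}"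

text \<open>Hamiltonian with boundary condition s (s = 1 for plus, s = -1 for minus).
  Each unordered pair u ~ v inside Lambda N is counted once (the ordered double sum is halved).\<close>
definition Ham :: "nat \<Rightarrow> real \<Rightarrow> (site \<Rightarrow> real) \<Rightarrow> (site \<Rightarrow> real) \<Rightarrow> real" where
  "Ham N s g \<sigma> = - ((1/2) * (\<Sum>u\<in>Lambda N. \<Sum>v\<in>{v\<in>Lambda N. nn u v}. \<sigma> u * \<sigma> v)
        + s * (\<Sum>u\<in>Lambda N. \<Sum>v\<in>{v\<in>bdry (Lambda N). nn u v}. \<sigma> u)
        + (\<Sum>u\<in>Lambda N. \<sigma> u * g u))"

definition ground_state :: "nat \<Rightarrow> real \<Rightarrow> (site \<Rightarrow> real) \<Rightarrow> (site \<Rightarrow> real) \<Rightarrow> bool" where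
  "ground_state N s g \<sigma> \<longleftrightarrow> \<sigma> \<in> configs N \<and> (\<forall>\<tau>\<in>configs N. Ham N s g \<sigma> \<le> Ham N s g \<tau>)"

definition disagree :: "nat \<Rightarrow> (site \<Rightarrow> real) \<Rightarrow> (site \<Rightarrow> real) \<Rightarrow> site set" where
  "disagree N sp sm = {v\<in>Lambda N. sp v = 1 \<and> sm v = -1}"

definition path_to_bdry :: "site set \<Rightarrow> site set \<Rightarrow> site \<Rightarrow> site list \<Rightarrow> bool" where
  "path_to_bdry A S v p \<longleftrightarrow> p \<noteq> [] \<and> hd p = v \<and> set p \<subseteq> S
     \<and> (\<forall>i. Suc i < length p \<longrightarrow> nn (p ! i) (p ! Suc i))
     \<and> (\<exists>w\<in>bdry A. nn (last p) w)"

definition field_law :: "nat \<Rightarrow> real \<Rightarrow> (site \<Rightarrow> real) measure" where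
  "field_law N eps = Pi\<^sub>M (Lambda N) (\<lambda>_. density lborel (normal_density 0 eps))"

end

theory Submission
  imports Defs
begin

lemma singleton_null_density:
  "{a::real} \<in> null_sets (density lborel (normal_density 0 eps))"
  apply (subst null_sets_density_iff)
   apply simp
  by (simp add: frequently_def AE_lborel_singleton)

lemma hyperplane_null:
  fixes c :: "site \<Rightarrow> real"
  assumes eps: "eps > 0" and fin: "finite I" and u: "u \<in> I" and cu: "c u \<noteq> 0"
  shows "{h \<in> space (Pi\<^sub>M I (\<lambda>_. density lborel (normal_density 0 eps))).
           (\<Sum>w\<in>I. c w * h w) = d} \<in> null_sets (Pi\<^sub>M I (\<lambda>_. density lborel (normal_density 0 eps)))"
    (is "?S \<in> null_sets ?P")
proof -
  define M where "M = (\<lambda>_::site. density lborel (normal_density 0 eps))"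
  interpret product_sigma_finite M
    unfolding product_sigma_finite_def M_def
    using prob_space_normal_density[OF eps] prob_space_imp_sigma_finite by blast
  define J where "J = I - {u}"
  have IJ: "I = insert u J" "u \<notin> J" "finite J" using u fin by (auto simp: J_def)
  have meas: "(\<lambda>h. \<Sum>w\<in>I. c w * h w) \<in> borel_measurable ?P"
  proof (intro borel_measurable_sum borel_measurable_times borel_measurable_const)
    fix w assume w: "w \<in> I"
    have "(\<lambda>h. h w) \<in> ?P \<rightarrow>\<^sub>M density lborel (normal_density 0 eps)"
      by (rule measurable_component_singleton[OF w])
    then show "(\<lambda>h. h w) \<in> borel_measurable ?P"
      by (subst measurable_cong_sets[OF refl, where N'="density lborel (normal_density 0 eps)"]) auto
  qed
  have S: "?S \<in> sets ?P"
    using meas by measurable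
  have "emeasure ?P ?S = (\<integral>\<^sup>+ h. indicator ?S h \<partial>?P)"
    using S by simp
  also have "\<dots> = (\<integral>\<^sup>+ x. (\<integral>\<^sup>+ y. indicator ?S (x(u := y)) \<partial>(M u)) \<partial>(Pi\<^sub>M J M))"
    unfolding M_def[symmetric] IJ(1)
    by (rule product_nn_integral_insert) (use IJ S M_def in auto)
  also have "\<dots> = (\<integral>\<^sup>+ x. 0 \<partial>(Pi\<^sub>M J M))"
  proof (rule nn_integral_cong)
    fix x assume x: "x \<in> space (Pi\<^sub>M J M)"
    define r where "r = (\<Sum>w\<in>J. c w * x w)"
    have "\<And>y. indicator ?S (x(u := y)) = (indicator {(d - r) / c u} y :: ennreal)"
    proof -
      fix y
      have sp: "x(u := y) \<in> space ?P" using x IJ by (auto simp: space_PiM M_def PiE_def extensional_def)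
      have "(\<Sum>w\<in>I. c w * (x(u := y)) w) = c u * y + r"
        unfolding IJ(1) r_def using IJ by (simp add: sum.insert) (rule sum.cong, auto)
      then have "(x(u := y) \<in> ?S) = (y = (d - r) / c u)"
        using sp cu by (auto simp: field_simps)
      then show "indicator ?S (x(u := y)) = (indicator {(d - r) / c u} y :: ennreal)"
        by (simp add: indicator_def)
    qed
    then show "(\<integral>\<^sup>+ y. indicator ?S (x(u := y)) \<partial>(M u)) = 0"
      using singleton_null_density[of "(d - r) / c u" eps]
      by (simp add: M_def null_setsD1)
  qed
  finally show ?thesis using S by (simp add: null_sets_def)
qed


definition Isum :: "nat \<Rightarrow> (site \<Rightarrow> real) \<Rightarrow> real" where
  "Isum N \<sigma> = (\<Sum>u\<in>Lambda N. \<Sum>v\<in>{v\<in>Lambda N. nn u v}. \<sigma> u * \<sigma> v)"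
definition Bd :: "nat \<Rightarrow> (site \<Rightarrow> real) \<Rightarrow> real" where
  "Bd N \<sigma> = (\<Sum>u\<in>Lambda N. \<Sum>v\<in>{v\<in>bdry (Lambda N). nn u v}. \<sigma> u)"
definition Fs :: "nat \<Rightarrow> (site \<Rightarrow> real) \<Rightarrow> (site \<Rightarrow> real) \<Rightarrow> real" where
  "Fs N g \<sigma> = (\<Sum>u\<in>Lambda N. \<sigma> u * g u)"

lemma Ham_eq: "Ham N s g \<sigma> = - ((1/2) * Isum N \<sigma> + s * Bd N \<sigma> + Fs N g \<sigma>)"
  unfolding Ham_def Isum_def Bd_def Fs_def ..

lemma Bd_alt: "Bd N \<sigma> = (\<Sum>u\<in>Lambda N. real (card {v\<in>bdry (Lambda N). nn u v}) * \<sigma> u)"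
  unfolding Bd_def by simp

lemma Bd_eq:
  assumes "\<And>u. u \<in> Lambda N \<Longrightarrow> {v\<in>bdry (Lambda N). nn u v} \<noteq> {} \<Longrightarrow> a u = c u"
  shows "Bd N a = Bd N c"
  unfolding Bd_def
proof (rule sum.cong[OF refl])
  fix u assume u: "u \<in> Lambda N"
  show "(\<Sum>v\<in>{v\<in>bdry (Lambda N). nn u v}. a u) = (\<Sum>v\<in>{v\<in>bdry (Lambda N). nn u v}. c u)"
  proof (cases "{v\<in>bdry (Lambda N). nn u v} = {}")
    case True then show ?thesis by (simp only: sum.empty)
  next
    case False then show ?thesis using assms[OF u] by simp
  qed
qed

lemma Bd_add:
  assumes "\<And>u. u \<in> Lambda N \<Longrightarrow> a u + b u = c u + d u"
  shows "Bd N a + Bd N b = Bd N c + Bd N d"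
  unfolding Bd_alt sum.distrib[symmetric] distrib_left[symmetric]
  by (rule sum.cong) (use assms in auto)

lemma energy_compare:
  assumes I: "\<And>u v. u \<in> Lambda N \<Longrightarrow> v \<in> Lambda N \<Longrightarrow> nn u v \<Longrightarrow>
      c u * c v + d u * d v \<le> a u * a v + b u * b v"
  and B: "s1 * Bd N a + s2 * Bd N b = s1 * Bd N c + s2 * Bd N d"
  and F: "\<And>u. u \<in> Lambda N \<Longrightarrow> c u * f1 u + d u * f2 u \<le> a u * f1 u + b u * f2 u"
  shows "Ham N s1 f1 a + Ham N s2 f2 b \<le> Ham N s1 f1 c + Ham N s2 f2 d"
proof -
  have "Isum N c + Isum N d \<le> Isum N a + Isum N b"
    unfolding Isum_def sum.distrib[symmetric]
    by (intro sum_mono) (use I in auto)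
  moreover have "Fs N f1 c + Fs N f2 d \<le> Fs N f1 a + Fs N f2 b"
    unfolding Fs_def sum.distrib[symmetric]
    by (intro sum_mono) (use F in auto)
  ultimately show ?thesis unfolding Ham_eq using B by linarith
qed

lemma configs_val: "\<sigma> \<in> configs N \<Longrightarrow> u \<in> Lambda N \<Longrightarrow> \<sigma> u = 1 \<or> \<sigma> u = -1"
  unfolding configs_def by auto

lemma nn_sym: "nn u v \<Longrightarrow> nn v u"
  unfolding nn_def by (simp add: abs_minus_commute)

lemma mono_gs:
  assumes g1: "ground_state N s f \<sigma>" and g2: "ground_state N s f' \<sigma>'"
    and ff: "\<And>u. u \<in> Lambda N \<Longrightarrow> f u \<le> f' u"
    and uq: "\<forall>\<tau>\<in>configs N. Ham N s f \<tau> = Ham N s f \<sigma> \<longrightarrow> \<tau> = \<sigma>"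
  shows "\<sigma> v \<le> \<sigma>' v"
proof -
  define m where "m = (\<lambda>v. min (\<sigma> v) (\<sigma>' v))"
  define M where "M = (\<lambda>v. max (\<sigma> v) (\<sigma>' v))"
  have c1: "\<sigma> \<in> configs N" and c2: "\<sigma>' \<in> configs N"
    using g1 g2 unfolding ground_state_def by auto
  have mc: "m \<in> configs N" and Mc: "M \<in> configs N"
    using c1 c2 unfolding configs_def m_def M_def by (auto simp: min_def max_def)
  have "Ham N s f m + Ham N s f' M \<le> Ham N s f \<sigma> + Ham N s f' \<sigma>'"
  proof (rule energy_compare)
    fix u w assume u: "u \<in> Lambda N" and w: "w \<in> Lambda N"
    show "\<sigma> u * \<sigma> w + \<sigma>' u * \<sigma>' w \<le> m u * m w + M u * M w"
      using configs_val[OF c1 u] configs_val[OF c2 u] configs_val[OF c1 w] configs_val[OF c2 w]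
      unfolding m_def M_def by auto
  next
    have "Bd N m + Bd N M = Bd N \<sigma> + Bd N \<sigma>'"
      by (rule Bd_add) (auto simp: m_def M_def min_def max_def)
    then show "s * Bd N m + s * Bd N M = s * Bd N \<sigma> + s * Bd N \<sigma>'"
      by (metis distrib_left)
  next
    fix u assume u: "u \<in> Lambda N"
    show "\<sigma> u * f u + \<sigma>' u * f' u \<le> m u * f u + M u * f' u"
      using configs_val[OF c1 u] configs_val[OF c2 u] ff[OF u]
      unfolding m_def M_def by auto
  qed
  moreover have "Ham N s f \<sigma> \<le> Ham N s f m" using g1 mc unfolding ground_state_def by auto
  moreover have "Ham N s f' \<sigma>' \<le> Ham N s f' M" using g2 Mc unfolding ground_state_def by auto
  ultimately have "Ham N s f m = Ham N s f \<sigma>" by linarith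
  with uq mc have "m = \<sigma>" by blast
  then show ?thesis unfolding m_def by (metis min.cobounded2)
qed

definition walk :: "site set \<Rightarrow> site \<Rightarrow> site \<Rightarrow> site list \<Rightarrow> bool" where
  "walk D v w p \<longleftrightarrow> p \<noteq> [] \<and> hd p = v \<and> last p = w \<and> set p \<subseteq> D
     \<and> (\<forall>i. Suc i < length p \<longrightarrow> nn (p ! i) (p ! Suc i))"

lemma walk_snoc:
  assumes "walk D v u p" "z \<in> D" "nn u z"
  shows "walk D v z (p @ [z])"
  unfolding walk_def
proof (intro conjI allI impI)
  fix i assume i: "Suc i < length (p @ [z])"
  show "nn ((p @ [z]) ! i) ((p @ [z]) ! Suc i)"
  proof (cases "Suc i < length p")
    case True then show ?thesis using assms(1) unfolding walk_def by (auto simp: nth_append)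
  next
    case False
    then have "Suc i = length p" using i by simp
    moreover have "p ! i = u" using assms(1) \<open>Suc i = length p\<close> unfolding walk_def
      by (metis diff_Suc_1 last_conv_nth)
    ultimately show ?thesis using assms(3) by (simp add: nth_append)
  qed
qed (use assms in \<open>auto simp: walk_def\<close>)

lemma det:
  assumes x: "\<forall>v\<in>Lambda N. x v \<ge> 0"
    and gsp: "ground_state N 1 g sp" and gsm: "ground_state N (-1) g sm"
    and gcp: "ground_state N 1 (\<lambda>v. g v + x v) cp"
    and gcm: "ground_state N (-1) (\<lambda>v. g v + x v) cm"
    and up: "\<forall>\<tau>\<in>configs N. Ham N 1 g \<tau> = Ham N 1 g sp \<longrightarrow> \<tau> = sp"
    and um: "\<forall>\<tau>\<in>configs N. Ham N (-1) g \<tau> = Ham N (-1) g sm \<longrightarrow> \<tau> = sm"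
    and v: "v \<in> disagree N sp sm \<inter> disagree N cp cm"
  shows "\<exists>p. path_to_bdry (Lambda N) (disagree N sp sm \<inter> disagree N cp cm) v p"
proof (rule ccontr)
  assume np: "\<not> ?thesis"
  define D where "D = disagree N sp sm \<inter> disagree N cp cm"
  define A where "A = {w. \<exists>p. walk D v w p}"
  have Dchar: "w \<in> D \<longleftrightarrow> w \<in> Lambda N \<and> sp w = 1 \<and> sm w = -1 \<and> cp w = 1 \<and> cm w = -1" for w
    unfolding D_def disagree_def by auto
  have csp: "sp \<in> configs N" and csm: "sm \<in> configs N" and ccp: "cp \<in> configs N"
    and ccm: "cm \<in> configs N"
    using gsp gsm gcp gcm unfolding ground_state_def by auto
  have m1: "sp w \<le> cp w" for w
    by (rule mono_gs[OF gsp gcp _ up]) (use x in auto)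
  have m2: "sm w \<le> cm w" for w
    by (rule mono_gs[OF gsm gcm _ um]) (use x in auto)
  have "walk D v v [v]" unfolding walk_def using v D_def by auto
  then have vA: "v \<in> A" unfolding A_def by blast
  have AD: "A \<subseteq> D" unfolding A_def walk_def by auto (metis last_in_set subsetD)
  have AL: "A \<subseteq> Lambda N" using AD Dchar by auto
  have Anb: "{z\<in>bdry (Lambda N). nn w z} = {}" if wA: "w \<in> A" for w
  proof -
    obtain p where p: "walk D v w p" using wA unfolding A_def by blast
    have "\<not> path_to_bdry (Lambda N) D v p" using np D_def by auto
    then show ?thesis using p unfolding path_to_bdry_def walk_def by auto
  qed
  have Aext: "z \<in> A" if "w \<in> A" "z \<in> D" "nn w z" for w z
    using that walk_snoc unfolding A_def by blast
  have Aon: "sp w = 1 \<and> cm w = -1" if "w \<in> A" for w using that AD Dchar[of w] by blast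
  have nb: "\<not> (sp z = 1 \<and> cm z = -1)" if "w \<in> A" "z \<in> Lambda N" "z \<notin> A" "nn w z" for w z
  proof
    assume a: "sp z = 1 \<and> cm z = -1"
    have "cp z = 1" using m1[of z] a configs_val[OF ccp that(2)] by auto
    moreover have "sm z = -1" using m2[of z] a configs_val[OF csm that(2)] by auto
    ultimately have "z \<in> D" using a that(2) Dchar by auto
    then show False using Aext that by blast
  qed
  define sp' where "sp' = (\<lambda>w. if w \<in> A then cm w else sp w)"
  define cm' where "cm' = (\<lambda>w. if w \<in> A then sp w else cm w)"
  have csp': "sp' \<in> configs N" and ccm': "cm' \<in> configs N"
    using csp ccm AL unfolding configs_def sp'_def cm'_def by auto
  have "Ham N 1 g sp' + Ham N (-1) (\<lambda>v. g v + x v) cm' \<le> Ham N 1 g sp + Ham N (-1) (\<lambda>v. g v + x v) cm"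
  proof (rule energy_compare)
    fix u w assume u: "u \<in> Lambda N" and w: "w \<in> Lambda N" and nuw: "nn u w"
    show "sp u * sp w + cm u * cm w \<le> sp' u * sp' w + cm' u * cm' w"
    proof (cases "u \<in> A")
      case uA: True
      show ?thesis
      proof (cases "w \<in> A")
        case True then show ?thesis using uA Aon unfolding sp'_def cm'_def by auto
      next
        case False
        then show ?thesis using uA Aon[OF uA] nb[OF uA w False nuw] configs_val[OF csp w] configs_val[OF ccm w]
          unfolding sp'_def cm'_def by auto
      qed
    next
      case uA: False
      show ?thesis
      proof (cases "w \<in> A")
        case True then show ?thesis using uA Aon[OF True] nb[OF True u uA nn_sym[OF nuw]] configs_val[OF csp u] configs_val[OF ccm u]
          unfolding sp'_def cm'_def by auto
      next
        case False
        then show ?thesis using uA unfolding sp'_def cm'_def by auto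
      qed
    qed
  next
    have "Bd N sp' = Bd N sp" by (rule Bd_eq) (use Anb in \<open>auto simp: sp'_def\<close>)
    moreover have "Bd N cm' = Bd N cm" by (rule Bd_eq) (use Anb in \<open>auto simp: cm'_def\<close>)
    ultimately show "1 * Bd N sp' + - 1 * Bd N cm' = 1 * Bd N sp + - 1 * Bd N cm" by simp
  next
    fix u assume u: "u \<in> Lambda N"
    show "sp u * g u + cm u * (g u + x u) \<le> sp' u * g u + cm' u * (g u + x u)"
      using Aon[of u] x u unfolding sp'_def cm'_def by (auto simp: algebra_simps)
  qed
  moreover have "Ham N 1 g sp \<le> Ham N 1 g sp'" using gsp csp' unfolding ground_state_def by auto
  moreover have "Ham N (-1) (\<lambda>v. g v + x v) cm \<le> Ham N (-1) (\<lambda>v. g v + x v) cm'"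
    using gcm ccm' unfolding ground_state_def by auto
  ultimately have "Ham N 1 g sp' = Ham N 1 g sp" by linarith
  with up csp' have "sp' = sp" by blast
  then have "sp' v = sp v" by simp
  then show False using Aon[OF vA] unfolding sp'_def using vA by simp
qed


lemma finite_Lambda: "finite (Lambda N)"
proof -
  have "Lambda N \<subseteq> {-int N..int N} \<times> {-int N..int N}"
    unfolding Lambda_def by (clarsimp simp: abs_le_iff)
  then show ?thesis by (rule finite_subset) simp
qed
lemma finite_configs: "finite (configs N)"
proof -
  have "configs N \<subseteq> {f. \<forall>x. (x \<in> Lambda N \<longrightarrow> f x \<in> {1, -1}) \<and> (x \<notin> Lambda N \<longrightarrow> f x = 0)}"
    unfolding configs_def by blast
  moreover have "finite {f. \<forall>x. (x \<in> Lambda N \<longrightarrow> f x \<in> {1::real, -1}) \<and> (x \<notin> Lambda N \<longrightarrow> f x = 0)}"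
    by (rule finite_set_of_finite_funs[OF finite_Lambda]) simp
  ultimately show ?thesis by (rule finite_subset)
qed

lemma tie_null:
  assumes eps: "eps > 0" and c1: "\<sigma> \<in> configs N" and c2: "\<tau> \<in> configs N" and ne: "\<sigma> \<noteq> \<tau>"
  shows "{h \<in> space (field_law N eps). Ham N s h \<sigma> = Ham N s h \<tau>} \<in> null_sets (field_law N eps)"
proof -
  obtain u where u: "\<sigma> u \<noteq> \<tau> u" using ne by blast
  have uL: "u \<in> Lambda N"
  proof (rule ccontr)
    assume "u \<notin> Lambda N"
    then have "\<sigma> u = 0" "\<tau> u = 0" using c1 c2 unfolding configs_def by blast+
    then show False using u by simp
  qed
  define K where "K = (\<lambda>\<rho>. - ((1/2) * Isum N \<rho> + s * Bd N \<rho>))"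
  define d where "d = K \<sigma> - K \<tau>"
  have eq: "Ham N s h \<sigma> = Ham N s h \<tau> \<longleftrightarrow> (\<Sum>w\<in>Lambda N. (\<sigma> w - \<tau> w) * h w) = d" for h
  proof -
    have "(\<Sum>w\<in>Lambda N. (\<sigma> w - \<tau> w) * h w) = Fs N h \<sigma> - Fs N h \<tau>"
      unfolding Fs_def sum_subtractf[symmetric] by (simp add: algebra_simps)
    then show ?thesis unfolding Ham_eq d_def K_def by linarith
  qed
  have "{h \<in> space (field_law N eps). Ham N s h \<sigma> = Ham N s h \<tau>}
      = {h \<in> space (field_law N eps). (\<Sum>w\<in>Lambda N. (\<sigma> w - \<tau> w) * h w) = d}"
    using eq by auto
  also have "\<dots> \<in> null_sets (field_law N eps)"
    unfolding field_law_def
    by (rule hyperplane_null[OF eps finite_Lambda uL]) (use u in simp)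
  finally show ?thesis .
qed

theorem lemma2p5:
  fixes N :: nat and eps :: real and x :: "site \<Rightarrow> real"
  assumes "eps > 0" and "\<forall>v\<in>Lambda N. x v \<ge> 0"
  shows "AE h in field_law N eps.
    \<forall>sp sm cp cm.
      ground_state N 1 h sp \<and> ground_state N (-1) h sm \<and>
      ground_state N 1 (\<lambda>v. h v + x v) cp \<and> ground_state N (-1) (\<lambda>v. h v + x v) cm \<longrightarrow>
      (\<forall>v \<in> disagree N sp sm \<inter> disagree N cp cm.
         \<exists>p. path_to_bdry (Lambda N) (disagree N sp sm \<inter> disagree N cp cm) v p)"
proof -
  define T where "T = {(s, \<sigma>, \<tau>). s \<in> {1::real, -1} \<and> \<sigma> \<in> configs N \<and> \<tau> \<in> configs N \<and> \<sigma> \<noteq> \<tau>}"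
  define E where "E = (\<lambda>(s, \<sigma>, \<tau>). {h \<in> space (field_law N eps). Ham N s h \<sigma> = Ham N s h \<tau>})"
  have finT: "finite T"
  proof -
    have "T \<subseteq> {1::real, -1} \<times> configs N \<times> configs N" unfolding T_def by auto
    then show ?thesis using finite_configs finite_subset by blast
  qed
  have null: "(\<Union>t\<in>T. E t) \<in> null_sets (field_law N eps)"
  proof (rule null_sets_UN')
    show "countable T" using finT by (rule countable_finite)
  next
    fix t assume "t \<in> T"
    then obtain s \<sigma> \<tau> where t: "t = (s, \<sigma>, \<tau>)" "\<sigma> \<in> configs N" "\<tau> \<in> configs N" "\<sigma> \<noteq> \<tau>"
      unfolding T_def by auto
    show "E t \<in> null_sets (field_law N eps)"
      unfolding t(1) E_def using tie_null[OF assms(1) t(2-4)] by simp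
  qed
  show ?thesis
  proof (rule AE_I'[OF null], rule subsetI, rule ccontr)
    fix h assume hin: "h \<in> {h \<in> space (field_law N eps). \<not> (\<forall>sp sm cp cm.
      ground_state N 1 h sp \<and> ground_state N (-1) h sm \<and>
      ground_state N 1 (\<lambda>v. h v + x v) cp \<and> ground_state N (-1) (\<lambda>v. h v + x v) cm \<longrightarrow>
      (\<forall>v \<in> disagree N sp sm \<inter> disagree N cp cm.
         \<exists>p. path_to_bdry (Lambda N) (disagree N sp sm \<inter> disagree N cp cm) v p))}"
      and nU: "h \<notin> (\<Union>t\<in>T. E t)"
    have hs: "h \<in> space (field_law N eps)" using hin by blast
    obtain sp sm cp cm v where g: "ground_state N 1 h sp" "ground_state N (-1) h sm"
        "ground_state N 1 (\<lambda>v. h v + x v) cp" "ground_state N (-1) (\<lambda>v. h v + x v) cm"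
      and v: "v \<in> disagree N sp sm \<inter> disagree N cp cm"
      and np: "\<not> (\<exists>p. path_to_bdry (Lambda N) (disagree N sp sm \<inter> disagree N cp cm) v p)"
      using hin by blast
    have uq: "\<forall>\<tau>\<in>configs N. Ham N s h \<tau> = Ham N s h \<rho> \<longrightarrow> \<tau> = \<rho>"
      if s: "s \<in> {1, -1}" and \<rho>: "\<rho> \<in> configs N" for s \<rho>
    proof (intro ballI impI)
      fix \<tau> assume \<tau>: "\<tau> \<in> configs N" and eqH: "Ham N s h \<tau> = Ham N s h \<rho>"
      show "\<tau> = \<rho>"
      proof (rule ccontr)
        assume "\<tau> \<noteq> \<rho>"
        then have "(s, \<tau>, \<rho>) \<in> T" unfolding T_def using s \<tau> \<rho> by auto
        moreover have "h \<in> E (s, \<tau>, \<rho>)" unfolding E_def using hs eqH by simp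
        ultimately show False using nU by blast
      qed
    qed
    have c1: "sp \<in> configs N" and c2: "sm \<in> configs N"
      using g(1,2) unfolding ground_state_def by auto
    have "\<exists>p. path_to_bdry (Lambda N) (disagree N sp sm \<inter> disagree N cp cm) v p"
      by (rule det[OF assms(2) g uq[OF _ c1] uq[OF _ c2]]) (use v in auto)
    then show False using np by blast
  qed
qed

end
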